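(* Let $\mathcal{Q}=\langle\mathcal{A},\mathcal{R}^-,\mathcal{R}^+,\tau\rangle$ be a QBAF, $\sigma$ a gradual semantics, $\alpha\in\mathcal{A}$ and $r_i,r_j\in\mathcal{R}$ with $r_i\neq r_j$. Suppose there exists $\mathcal{S}'\subseteq\mathcal{R}\setminus\{r_i,r_j\}$ with $\sigma_{\mathcal{S}'\cup\{r_i\}}(\alpha)>\sigma_{\mathcal{S}'\cup\{r_j\}}(\alpha)$, and that for all $\mathcal{S}''\subseteq\mathcal{R}\setminus\{r_i,r_j\}$ with $\mathcal{S}''\neq\mathcal{S}'$ we have $\sigma_{\mathcal{S}''\cup\{r_i\}}(\alpha)\ge\sigma_{\mathcal{S}''\cup\{r_j\}}(\alpha)$. Then $\phi^\alpha_\sigma(r_i)>\phi^\alpha_\sigma(r_j)$.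
   Context: A QBAF is a quadruple $\mathcal{Q}=\langle\mathcal{A},\mathcal{R}^-,\mathcal{R}^+,\tau\rangle$ with $\mathcal{A}$ a finite set of arguments, $\mathcal{R}^-,\mathcal{R}^+\subseteq\mathcal{A}\times\mathcal{A}$ disjoint attack and support relations, and $\tau:\mathcal{A}\to[0,1]$ base scores; $\mathcal{R}=\mathcal{R}^-\cup\mathcal{R}^+$. A gradual semantics $\sigma$ assigns strengths in $[0,1]$ to arguments of QBAFs and is assumed well-defined on all QBAFs considered. For $\mathcal{S}\subseteq\mathcal{R}$, $\sigma_{\mathcal{S}}(\alpha)$ denotes the strength of $\alpha$ in $\langle\mathcal{A},\mathcal{R}^-\cap\mathcal{S},\mathcal{R}^+\cap\mathcal{S},\tau\rangle$. The RAE from $r$ to $\alpha$ under $\sigma$ is $$\phi^\alpha_\sigma(r)=\sum_{\mathcal{S}\subseteq\mathcal{R}\setminus\{r\}}\frac{(|\mathcal{R}|-|\mathcal{S}|-1)!\,|\mathcal{S}|!}{|\mathcal{R}|!}\big[\sigma_{\mathcal{S}\cup\{r\}}(\alpha)-\sigma_{\mathcal{S}}(\alpha)\big].$$ *)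

theory Defs
  imports "HOL-Analysis.Analysis"
begin

record 'a qbaf =
  args :: "'a set"
  att  :: "('a \<times> 'a) set"
  supp :: "('a \<times> 'a) set"
  bs   :: "'a \<Rightarrow> real"

definition is_qbaf :: "'a qbaf \<Rightarrow> bool" where
  "is_qbaf Q \<longleftrightarrow> finite (args Q)
     \<and> att Q \<subseteq> args Q \<times> args Q \<and> supp Q \<subseteq> args Q \<times> args Q
     \<and> att Q \<inter> supp Q = {}
     \<and> (\<forall>a\<in>args Q. 0 \<le> bs Q a \<and> bs Q a \<le> 1)"

definition rels :: "'a qbaf \<Rightarrow> ('a \<times> 'a) set" where
  "rels Q = att Q \<union> supp Q"

type_synonym 'a semantics = "'a qbaf \<Rightarrow> 'a \<Rightarrow> real"

definition restrict_rels :: "'a qbaf \<Rightarrow> ('a \<times> 'a) set \<Rightarrow> 'a qbaf" where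
  "restrict_rels Q S = \<lparr>args = args Q, att = att Q \<inter> S, supp = supp Q \<inter> S, bs = bs Q\<rparr>"

definition strength_sub :: "'a semantics \<Rightarrow> 'a qbaf \<Rightarrow> ('a \<times> 'a) set \<Rightarrow> 'a \<Rightarrow> real" where
  "strength_sub \<sigma> Q S \<alpha> = \<sigma> (restrict_rels Q S) \<alpha>"

text \<open>Relation attribution explanation (Shapley value of relation r towards alpha).\<close>
definition RAE :: "'a semantics \<Rightarrow> 'a qbaf \<Rightarrow> 'a \<Rightarrow> ('a \<times> 'a) \<Rightarrow> real" where
  "RAE \<sigma> Q \<alpha> r =
     (\<Sum>S\<in>Pow (rels Q - {r}).
        (fact (card (rels Q) - card S - 1) * fact (card S) / fact (card (rels Q)))
        * (strength_sub \<sigma> Q (S \<union> {r}) \<alpha> - strength_sub \<sigma> Q S \<alpha>))"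

end

theory Submission
  imports Defs
begin

lemma sum_Pow_insert':
  assumes "finite T" "s \<notin> T"
  shows "(\<Sum>S\<in>Pow (insert s T). f S) = (\<Sum>S\<in>Pow T. f S) + (\<Sum>S\<in>Pow T. f (insert s S))"
proof -
  have "Pow (insert s T) = Pow T \<union> insert s ` Pow T" by (rule Pow_insert)
  moreover have "Pow T \<inter> insert s ` Pow T = {}" using assms by auto
  moreover have "inj_on (insert s) (Pow T)" using assms
    by (auto simp: inj_on_def)
  ultimately show ?thesis using assms
    by (simp add: sum.union_disjoint sum.reindex)
qed

theorem proposition5:
  fixes Q :: "'a qbaf" and \<sigma> :: "'a semantics" and \<alpha> :: 'a
    and ri rj :: "'a \<times> 'a" and S' :: "('a \<times> 'a) set"
  assumes "is_qbaf Q"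
    and "\<And>Q' a. is_qbaf Q' \<Longrightarrow> 0 \<le> \<sigma> Q' a \<and> \<sigma> Q' a \<le> 1"
    and "\<alpha> \<in> args Q"
    and "ri \<in> rels Q" and "rj \<in> rels Q" and "ri \<noteq> rj"
    and "S' \<subseteq> rels Q - {ri, rj}"
    and "strength_sub \<sigma> Q (S' \<union> {ri}) \<alpha> > strength_sub \<sigma> Q (S' \<union> {rj}) \<alpha>"
    and "\<And>S''. S'' \<subseteq> rels Q - {ri, rj} \<Longrightarrow> S'' \<noteq> S' \<Longrightarrow>
           strength_sub \<sigma> Q (S'' \<union> {ri}) \<alpha> \<ge> strength_sub \<sigma> Q (S'' \<union> {rj}) \<alpha>"
  shows "RAE \<sigma> Q \<alpha> ri > RAE \<sigma> Q \<alpha> rj"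
proof -
  define R where "R = rels Q"
  define T where "T = R - {ri, rj}"
  define n where "n = card R"
  define v where "v S = strength_sub \<sigma> Q S \<alpha>" for S
  define c :: "nat \<Rightarrow> real" where "c k = fact (n - k - 1) * fact k / fact n" for k
  have finR: "finite R" using assms(1) unfolding R_def rels_def is_qbaf_def
    by (meson finite_SigmaI finite_Un finite_subset)
  have finT: "finite T" using finR T_def by simp
  have cpos: "c k > 0" for k unfolding c_def by simp
  have Ri: "R - {ri} = insert rj T" and Rj: "R - {rj} = insert ri T"
    using assms(4,5,6) unfolding T_def R_def by auto
  have rjT: "rj \<notin> T" and riT: "ri \<notin> T" unfolding T_def by auto
  have cardins: "card (insert s U) = Suc (card U)" if "U \<in> Pow T" "s \<notin> T" for s U
    using that finT by (meson PowD card_insert_disjoint finite_subset subsetD)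
  have e1: "RAE \<sigma> Q \<alpha> ri = (\<Sum>U\<in>Pow T. c (card U) * (v (U \<union> {ri}) - v U))
      + (\<Sum>U\<in>Pow T. c (Suc (card U)) * (v (U \<union> {ri, rj}) - v (U \<union> {rj})))"
  proof -
    have "RAE \<sigma> Q \<alpha> ri = (\<Sum>S\<in>Pow (insert rj T). c (card S) * (v (S \<union> {ri}) - v S))"
      unfolding RAE_def Ri[unfolded R_def] c_def n_def R_def v_def by simp
    also have "\<dots> = (\<Sum>U\<in>Pow T. c (card U) * (v (U \<union> {ri}) - v U))
      + (\<Sum>U\<in>Pow T. c (card (insert rj U)) * (v (insert rj U \<union> {ri}) - v (insert rj U)))"
      by (rule sum_Pow_insert'[OF finT rjT])
    also have "(\<Sum>U\<in>Pow T. c (card (insert rj U)) * (v (insert rj U \<union> {ri}) - v (insert rj U)))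
       = (\<Sum>U\<in>Pow T. c (Suc (card U)) * (v (U \<union> {ri, rj}) - v (U \<union> {rj})))"
      by (rule sum.cong) (auto simp: cardins[OF _ rjT] insert_commute)
    finally show ?thesis .
  qed
  have e2: "RAE \<sigma> Q \<alpha> rj = (\<Sum>U\<in>Pow T. c (card U) * (v (U \<union> {rj}) - v U))
      + (\<Sum>U\<in>Pow T. c (Suc (card U)) * (v (U \<union> {ri, rj}) - v (U \<union> {ri})))"
  proof -
    have "RAE \<sigma> Q \<alpha> rj = (\<Sum>S\<in>Pow (insert ri T). c (card S) * (v (S \<union> {rj}) - v S))"
      unfolding RAE_def Rj[unfolded R_def] c_def n_def R_def v_def by simp
    also have "\<dots> = (\<Sum>U\<in>Pow T. c (card U) * (v (U \<union> {rj}) - v U))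
      + (\<Sum>U\<in>Pow T. c (card (insert ri U)) * (v (insert ri U \<union> {rj}) - v (insert ri U)))"
      by (rule sum_Pow_insert'[OF finT riT])
    also have "(\<Sum>U\<in>Pow T. c (card (insert ri U)) * (v (insert ri U \<union> {rj}) - v (insert ri U)))
       = (\<Sum>U\<in>Pow T. c (Suc (card U)) * (v (U \<union> {ri, rj}) - v (U \<union> {ri})))"
      by (rule sum.cong) (auto simp: cardins[OF _ riT] insert_commute)
    finally show ?thesis .
  qed
  have diff: "RAE \<sigma> Q \<alpha> ri - RAE \<sigma> Q \<alpha> rj =
     (\<Sum>U\<in>Pow T. (c (card U) + c (Suc (card U))) * (v (U \<union> {ri}) - v (U \<union> {rj})))"
    unfolding e1 e2 by (simp add: sum_subtractf[symmetric] sum.distrib[symmetric] algebra_simps)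
  have "0 < (\<Sum>U\<in>Pow T. (c (card U) + c (Suc (card U))) * (v (U \<union> {ri}) - v (U \<union> {rj})))"
  proof (rule sum_pos2[where i=S'])
    show "finite (Pow T)" using finT by simp
    show "S' \<in> Pow T" using assms(7) T_def R_def by simp
    show "0 < (c (card S') + c (Suc (card S'))) * (v (S' \<union> {ri}) - v (S' \<union> {rj}))"
      using assms(8) cpos unfolding v_def by (simp add: add_pos_pos)
    show "\<And>U. U \<in> Pow T \<Longrightarrow> 0 \<le> (c (card U) + c (Suc (card U))) * (v (U \<union> {ri}) - v (U \<union> {rj}))"
    proof -
      fix U assume U: "U \<in> Pow T"
      have "v (U \<union> {ri}) \<ge> v (U \<union> {rj})"
      proof (cases "U = S'")
        case True then show ?thesis using assms(8) unfolding v_def by simp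
      next
        case False then show ?thesis using assms(9)[of U] U unfolding v_def T_def R_def by simp
      qed
      then show "0 \<le> (c (card U) + c (Suc (card U))) * (v (U \<union> {ri}) - v (U \<union> {rj}))"
        using cpos[of "card U"] cpos[of "Suc (card U)"] by simp
    qed
  qed
  then show ?thesis using diff by simp
qed

end
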